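(* Let $d\ge3$ and $h\ge1$. The Hall $(d-1)$-subgroup of the sandpile group $G(d,h)$ is cyclic of order $(d-1)^h$.
   Context: Let $\mathcal{T}(d,h)$ be the rooted tree in which the root $0$ has $d$ children, every vertex at distance $1,\dots,h-1$ from the root has $d-1$ children, and the vertices at distance $h$ are leaves. Let $V$ be its vertex set, $A$ its adjacency matrix, $\Delta := dI-A$, and $\Lambda\subset\mathbb{Z}^V$ the lattice spanned by the rows of $\Delta$. Then $G(d,h):=\mathbb{Z}^V/\Lambda$. For a finite group $G$, a subgroup $H$ is a Hall subgroup if $\gcd(|H|,|G:H|)=1$; it is a Hall $t$-subgroup if moreover $|H|$ and $t$ have the same set of prime divisors. A finite abelian group has a unique Hall $t$-subgroup for each $t$ dividing its order (here the Hall $(d-1)$-subgroup is the product of the Sylow $p$-subgroups for primes $p\mid d-1$). *)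

theory Defs
  imports "HOL-Algebra.Algebra"
begin

text \<open>Vertices of the tree T(d,h): a vertex is encoded by the list of child indices
  along the path from the root [].\<close>
definition tree_vertices :: "nat \<Rightarrow> nat \<Rightarrow> nat list set" where
  "tree_vertices d h = {xs. length xs \<le> h \<and>
     (\<forall>i<length xs. xs ! i < (if i = 0 then d else d - 1))}"

definition tree_adj :: "nat \<Rightarrow> nat \<Rightarrow> nat list \<Rightarrow> nat list \<Rightarrow> int" where
  "tree_adj d h u v =
     (if u \<in> tree_vertices d h \<and> v \<in> tree_vertices d h \<and>
         ((\<exists>i. v = u @ [i]) \<or> (\<exists>i. u = v @ [i])) then 1 else 0)"

definition tree_Delta :: "nat \<Rightarrow> nat \<Rightarrow> nat list \<Rightarrow> nat list \<Rightarrow> int" where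
  "tree_Delta d h u v =
     (if u \<in> tree_vertices d h \<and> v \<in> tree_vertices d h
      then (if u = v then int d else 0) - tree_adj d h u v else 0)"

definition ZV :: "'a set \<Rightarrow> ('a \<Rightarrow> int) monoid" where
  "ZV V = \<lparr>carrier = {x. \<forall>v. v \<notin> V \<longrightarrow> x v = 0},
           monoid.mult = (\<lambda>x y v. x v + y v), monoid.one = (\<lambda>_. 0)\<rparr>"

definition tree_lattice :: "nat \<Rightarrow> nat \<Rightarrow> (nat list \<Rightarrow> int) set" where
  "tree_lattice d h = {x. \<exists>c :: nat list \<Rightarrow> int.
      x = (\<lambda>v. \<Sum>u\<in>tree_vertices d h. c u * tree_Delta d h u v)}"

definition sandpile_group :: "nat \<Rightarrow> nat \<Rightarrow> (nat list \<Rightarrow> int) set monoid" where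
  "sandpile_group d h = ZV (tree_vertices d h) Mod tree_lattice d h"

definition hall_subgroup :: "('a, 'b) monoid_scheme \<Rightarrow> nat \<Rightarrow> 'a set \<Rightarrow> bool" where
  "hall_subgroup G t H \<longleftrightarrow> finite (carrier G) \<and> subgroup H G \<and>
     coprime (card H) (card (rcosets\<^bsub>G\<^esub> H)) \<and>
     {p. Factorial_Ring.prime (p::nat) \<and> p dvd card H} = {p. Factorial_Ring.prime (p::nat) \<and> p dvd t}"

end

theory Submission
  imports Defs
begin
lemma primes_sub_coprime:
  fixes M n q :: nat
  assumes "\<forall>p. Factorial_Ring.prime p \<and> p dvd n \<longrightarrow> p dvd q" "coprime M q"
  shows "coprime M n"
proof (rule ccontr)
  assume "\<not> coprime M n"
  then have "gcd M n \<noteq> 1" by (simp add: coprime_iff_gcd_eq_1)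
  then obtain p where p: "Factorial_Ring.prime p" "p dvd gcd M n" using prime_factor_nat by blast
  then have "p dvd M" "p dvd n" by auto
  with assms p have "p dvd q" by blast
  with \<open>p dvd M\<close> assms(2) p show False by (meson coprime_common_divisor not_prime_unit)
qed

lemma subgroup_incl_sub:
  assumes "group G" "subgroup I G" "subgroup J G" "I \<subseteq> J"
  shows "subgroup I (G\<lparr>carrier := J\<rparr>)"
proof -
  interpret group G by fact
  show ?thesis
  proof (rule subgroup.intro)
    show "I \<subseteq> carrier (G\<lparr>carrier := J\<rparr>)" using assms(4) by simp
    show "x \<otimes>\<^bsub>G\<lparr>carrier := J\<rparr>\<^esub> y \<in> I" if "x \<in> I" "y \<in> I" for x y
      using that assms(2) subgroup.m_closed by fastforce
    show "\<one>\<^bsub>G\<lparr>carrier := J\<rparr>\<^esub> \<in> I" using assms(2) subgroup.one_closed by fastforce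
    show "inv\<^bsub>G\<lparr>carrier := J\<rparr>\<^esub> x \<in> I" if "x \<in> I" for x
      using that assms(2,4) m_inv_consistent[OF assms(3)] subgroup.m_inv_closed by fastforce
  qed
qed

lemma sub_pow_card:
  assumes "group G" "subgroup H G" "finite H" "x \<in> H"
  shows "x [^]\<^bsub>G\<^esub> card H = \<one>\<^bsub>G\<^esub>"
proof -
  interpret group G by fact
  have gH: "group (G\<lparr>carrier := H\<rparr>)" using assms(2) subgroup.subgroup_is_group assms(1) by blast
  have "x [^]\<^bsub>G\<lparr>carrier := H\<rparr>\<^esub> order (G\<lparr>carrier := H\<rparr>) = \<one>\<^bsub>G\<lparr>carrier := H\<rparr>\<^esub>"
    using group.pow_order_eq_1[OF gH] assms(4) by simp
  then show ?thesis by (simp add: order_def nat_pow_consistent[symmetric])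
qed

lemma hall_abstract:
  fixes G (structure) and z and q h :: nat
  assumes cg: "comm_group G" and fin: "finite (carrier G)" and zc: "z \<in> carrier G"
    and oz: "group.ord G z = q ^ h" and q2: "q \<ge> 2" and h1: "h \<ge> 1"
    and key: "\<And>x. x \<in> carrier G \<Longrightarrow> \<exists>M::nat. coprime M q \<and> (\<exists>k::int. x [^] M = z [^] k)"
  shows "(\<exists>H. hall_subgroup G q H) \<and>
         (\<forall>H. hall_subgroup G q H \<longrightarrow> cyclic_group (G\<lparr>carrier := H\<rparr>) \<and> card H = q ^ h)"
proof -
  interpret comm_group G by (rule cg)
  define Z where "Z = generate G {z}"
  have Zsub: "subgroup Z G" unfolding Z_def using zc by (simp add: generate_is_subgroup)
  have Zeq: "Z = {z [^] (k::int) | k. k \<in> UNIV}" unfolding Z_def using generate_pow[OF zc] .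
  have cardZ: "card Z = q ^ h" unfolding Z_def using generate_pow_card[OF zc] oz by simp
  have A1: "x \<in> Z" if xc: "x \<in> carrier G" and xn: "x [^] (n::nat) = \<one>"
     and np: "\<forall>p. Factorial_Ring.prime p \<and> p dvd n \<longrightarrow> p dvd q" for x n
  proof -
    obtain M k where M: "coprime M q" and Mk: "x [^] M = z [^] (k::int)" using key[OF xc] by blast
    have "coprime M n" using primes_sub_coprime[OF np M] .
    then have "coprime (int M) (int n)" by simp
    then have "gcd (int M) (int n) = 1" by (simp only: coprime_iff_gcd_eq_1)
    then obtain a b :: int where ab: "a * int M + b * int n = 1"
      using bezout_int[of "int M" "int n"] by auto
    have "x = x [^] (a * int M + b * int n)" using ab xc by simp
    also have "\<dots> = x [^] (int M * a) \<otimes> x [^] (int n * b)" using xc by (simp add: int_pow_mult mult.commute)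
    also have "\<dots> = (x [^] int M) [^] a \<otimes> (x [^] int n) [^] b" using xc by (simp add: int_pow_pow)
    also have "\<dots> = z [^] (k * a)" using xc zc Mk xn by (simp add: int_pow_int int_pow_pow)
    finally show ?thesis using Zeq by blast
  qed
  have primes_qh: "{p. Factorial_Ring.prime p \<and> p dvd q ^ h} = {p. Factorial_Ring.prime (p::nat) \<and> p dvd q}"
    using h1 by (auto simp: prime_dvd_power_iff)
  have coprZ: "coprime (card Z) (card (rcosets Z))"
  proof (rule ccontr)
    assume "\<not> coprime (card Z) (card (rcosets Z))"
    then have "gcd (card Z) (card (rcosets Z)) \<noteq> 1" by (simp add: coprime_iff_gcd_eq_1)
    then obtain p where p: "Factorial_Ring.prime p" "p dvd gcd (card Z) (card (rcosets Z))"
      using prime_factor_nat by blast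
    have pZ: "p dvd q ^ h" using p(2) cardZ by (metis gcd_dvd1 dvd_trans)
    have pR: "p dvd card (rcosets Z)" using p(2) by (metis gcd_dvd2 dvd_trans)
    have ordG0: "card (rcosets Z) * card Z = order G" by (rule lagrange[OF Zsub])
    have ordG: "card (rcosets Z) * q ^ h = order G" using ordG0 cardZ by simp
    have oG0: "order G \<noteq> 0" using fin order_gt_0_iff_finite by auto
    define a where "a = multiplicity p (order G)"
    have "p ^ a dvd order G" unfolding a_def by (rule multiplicity_dvd)
    then obtain m where m: "order G = p ^ a * m" by blast
    obtain P where P: "subgroup P G" "card P = p ^ a" using sylow_thm[OF p(1) is_group m fin] by blast
    have finP: "finite P" using finite_subset[OF subgroup.subset[OF P(1)] fin] .
    have PZ: "P \<subseteq> Z"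
    proof (rule subsetI)
      fix x assume xP: "x \<in> P"
      have xc: "x \<in> carrier G" by (rule subgroup.mem_carrier[OF P(1) xP])
      have x1: "x [^] card P = \<one>" using sub_pow_card[OF is_group P(1) finP xP] .
      have x2: "\<forall>r. Factorial_Ring.prime r \<and> r dvd card P \<longrightarrow> r dvd q"
        proof (intro allI impI)
          fix r assume r: "Factorial_Ring.prime r \<and> r dvd card P"
          then have "r dvd p ^ a" using P(2) by simp
          then have "r dvd p" using r prime_dvd_power by blast
          then have "r = p" using r p(1) primes_dvd_imp_eq by blast
          then show "r dvd q" using pZ p(1) prime_dvd_power by blast
        qed
      show "x \<in> Z" by (rule A1[OF xc x1 x2])
    qed
    have gZ: "group (G\<lparr>carrier := Z\<rparr>)" using Zsub subgroup.subgroup_is_group is_group by blast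
    have "card (rcosets\<^bsub>G\<lparr>carrier := Z\<rparr>\<^esub> P) * card P = order (G\<lparr>carrier := Z\<rparr>)"
      using group.lagrange[OF gZ subgroup_incl_sub[OF is_group P(1) Zsub PZ]] .
    then have "card P dvd card Z" by (simp add: order_def) (metis dvd_triv_right)
    then have "p ^ a dvd q ^ h" using P(2) cardZ by simp
    then have "p ^ a * p dvd q ^ h * card (rcosets Z)" using pR by (rule mult_dvd_mono)
    then have "p ^ (a + 1) dvd q ^ h * card (rcosets Z)" by (simp add: mult.commute)
    then have "p ^ (a + 1) dvd order G" using ordG by (simp add: mult.commute)
    then have "a + 1 \<le> a" unfolding a_def using power_dvd_iff_le_multiplicity[OF oG0] p(1) not_prime_unit by blast
    then show False by simp
  qed
  have hallZ: "hall_subgroup G q Z"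
    unfolding hall_subgroup_def using fin Zsub coprZ cardZ primes_qh by simp
  have uniq: "H = Z" if hH: "hall_subgroup G q H" for H
  proof -
    from hH have Hs: "subgroup H G" and cop: "coprime (card H) (card (rcosets H))"
      and pr: "{p. Factorial_Ring.prime p \<and> p dvd card H} = {p. Factorial_Ring.prime p \<and> p dvd q}"
      unfolding hall_subgroup_def by auto
    have finH: "finite H" using finite_subset[OF subgroup.subset[OF Hs] fin] .
    have HZ: "H \<subseteq> Z"
    proof (rule subsetI)
      fix x assume xH: "x \<in> H"
      have xc: "x \<in> carrier G" by (rule subgroup.mem_carrier[OF Hs xH])
      have x1: "x [^] card H = \<one>" using sub_pow_card[OF is_group Hs finH xH] .
      have x2: "\<forall>r. Factorial_Ring.prime r \<and> r dvd card H \<longrightarrow> r dvd q"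
        using pr by blast
      show "x \<in> Z" by (rule A1[OF xc x1 x2])
    qed
    have zH: "z \<in> H"
    proof -
      have nH: "H \<lhd> G" using Hs normal_iff_subgroup by blast
      interpret N: normal H G by (rule nH)
      define T where "T = card (rcosets H)"
      have gM: "group (G Mod H)" by (rule N.factorgroup_is_group)
      have "H #> z \<in> carrier (G Mod H)" using zc by (simp add: FactGroup_def RCOSETS_def) blast
      then have "(H #> z) [^]\<^bsub>G Mod H\<^esub> order (G Mod H) = \<one>\<^bsub>G Mod H\<^esub>"
        using group.pow_order_eq_1[OF gM] by blast
      then have "H #> (z [^] T) = H"
        using N.FactGroup_pow[OF zc] by (simp add: T_def order_def FactGroup_def)
      then have zT: "z [^] T \<in> H" using rcos_self[of "z [^] T" H] zc Hs by simp
      have zq: "z [^] (q ^ h) = \<one>" using oz zc by (metis pow_ord_eq_1)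
      have "\<forall>r. Factorial_Ring.prime r \<and> r dvd q ^ h \<longrightarrow> r dvd card H"
        using pr primes_qh by blast
      then have "coprime T (q ^ h)" using primes_sub_coprime cop T_def by (metis coprime_commute)
      then have "coprime (int T) (int (q ^ h))" by simp
      then have "gcd (int T) (int (q ^ h)) = 1" by (simp only: coprime_iff_gcd_eq_1)
      then obtain a b :: int where ab: "a * int T + b * int (q ^ h) = 1"
        using bezout_int[of "int T" "int (q ^ h)"] by auto
      have "z = z [^] (a * int T + b * int (q ^ h))" using ab zc by simp
      also have "\<dots> = z [^] (int T * a) \<otimes> z [^] (int (q ^ h) * b)" using zc by (simp add: int_pow_mult mult.commute)
      also have "\<dots> = (z [^] int T) [^] a \<otimes> (z [^] int (q ^ h)) [^] b" using zc by (simp add: int_pow_pow)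
      also have "\<dots> = (z [^] T) [^] a"
      proof -
        have zq': "z [^] int (q ^ h) = \<one>" using zq by (simp only: int_pow_int)
        then show ?thesis using zc by (simp add: int_pow_int)
      qed
      finally have zeq: "z = (z [^] T) [^] a" .
      have "(z [^] T) [^] a \<in> H" by (rule subgroup_int_pow_closed[OF Hs zT])
      then show ?thesis using zeq by metis
    qed
    have "Z \<subseteq> H" using Zeq subgroup_int_pow_closed[OF Hs zH] by blast
    with HZ show "H = Z" by blast
  qed
  have cycZ: "cyclic_group (G\<lparr>carrier := Z\<rparr>)"
  proof -
    have gZ: "group (G\<lparr>carrier := Z\<rparr>)" using Zsub subgroup.subgroup_is_group is_group by blast
    have zZ: "z \<in> Z" using Zeq zc by (metis (mono_tags, lifting) UNIV_I int_pow_1 mem_Collect_eq)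
    have "Z = range (\<lambda>n::int. z [^]\<^bsub>G\<lparr>carrier := Z\<rparr>\<^esub> n)"
    proof -
      have r: "Z = range (\<lambda>n::int. z [^] n)" using Zeq by auto
      have e: "(\<lambda>n::int. z [^] n) = (\<lambda>n::int. z [^]\<^bsub>G\<lparr>carrier := Z\<rparr>\<^esub> n)"
        by (rule ext) (rule int_pow_consistent[OF Zsub zZ])
      show ?thesis unfolding e[symmetric] by (rule r)
    qed
    then show ?thesis using group.cyclic_group[OF gZ] zZ by auto
  qed
  show ?thesis using hallZ uniq cycZ cardZ by blast
qed

definition dlt :: "nat list \<Rightarrow> nat list \<Rightarrow> int" where
  "dlt u w = (if w = u then 1 else 0)"

definition cb :: "nat \<Rightarrow> nat \<Rightarrow> nat list \<Rightarrow> nat" where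
  "cb d h u = (if length u < h then (if u = [] then d else d - 1) else 0)"

lemma V_butlast: "u \<in> tree_vertices d h \<Longrightarrow> butlast u \<in> tree_vertices d h"
  unfolding tree_vertices_def by (auto simp: nth_butlast)

lemma V_snoc_iff: "u @ [i] \<in> tree_vertices d h \<longleftrightarrow> u \<in> tree_vertices d h \<and> i < cb d h u"
proof
  assume a: "u @ [i] \<in> tree_vertices d h"
  have "u \<in> tree_vertices d h" using V_butlast[OF a] by simp
  moreover have "i < cb d h u"
  proof -
    have l: "length u < h" using a unfolding tree_vertices_def by simp
    have "(u @ [i]) ! length u < (if length u = 0 then d else d - 1)"
      using a unfolding tree_vertices_def by auto
    then show ?thesis using l unfolding cb_def by (auto simp: nth_append)
  qed
  ultimately show "u \<in> tree_vertices d h \<and> i < cb d h u" by blast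
next
  assume a: "u \<in> tree_vertices d h \<and> i < cb d h u"
  then have l: "length u < h" unfolding cb_def by (auto split: if_splits)
  have ib: "i < (if length u = 0 then d else d - 1)" using a l unfolding cb_def by auto
  show "u @ [i] \<in> tree_vertices d h"
    unfolding tree_vertices_def
  proof (intro CollectI conjI allI impI)
    show "length (u @ [i]) \<le> h" using l by simp
    fix j assume j: "j < length (u @ [i])"
    show "(u @ [i]) ! j < (if j = 0 then d else d - 1)"
    proof (cases "j < length u")
      case True
      then show ?thesis using a unfolding tree_vertices_def by (auto simp: nth_append)
    next
      case False
      then have "j = length u" using j by simp
      then show ?thesis using ib by (simp add: nth_append)
    qed
  qed
qed

lemma V_finite: "finite (tree_vertices d h)"
proof -
  have "tree_vertices d h \<subseteq> {xs. set xs \<subseteq> {0..<d} \<and> length xs \<le> h}"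
  proof
    fix xs assume a: "xs \<in> tree_vertices d h"
    have "\<forall>i<length xs. xs ! i < d"
    proof (intro allI impI)
      fix i assume "i < length xs"
      then have "xs ! i < (if i = 0 then d else d - 1)" using a unfolding tree_vertices_def by blast
      then show "xs ! i < d" by (auto split: if_splits)
    qed
    then show "xs \<in> {xs. set xs \<subseteq> {0..<d} \<and> length xs \<le> h}"
      using a unfolding tree_vertices_def by (auto simp: in_set_conv_nth)
  qed
  then show ?thesis using finite_lists_length_le[of "{0..<d}" h] finite_subset by blast
qed

lemma sum_snoc_dlt: "(\<Sum>i<n. dlt (u @ [i]) w) = (if \<exists>i<n. w = u @ [i] then 1 else 0)"
proof (cases "\<exists>i<n. w = u @ [i]")
  case True
  then obtain j where j: "j < n" "w = u @ [j]" by blast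
  have "(\<Sum>i<n. dlt (u @ [i]) w) = (\<Sum>i<n. if i = j then 1 else 0)"
    using j by (intro sum.cong) (auto simp: dlt_def)
  also have "\<dots> = 1" using j by simp
  finally show ?thesis using True by simp
next
  case False
  then have "(\<Sum>i<n. dlt (u @ [i]) w) = (\<Sum>i<n. 0)"
    by (intro sum.cong) (auto simp: dlt_def)
  then show ?thesis using False by simp
qed

lemma row_eq:
  assumes u: "u \<in> tree_vertices d h"
  shows "tree_Delta d h u w = int d * dlt u w - (if u \<noteq> [] then dlt (butlast u) w else 0)
           - (\<Sum>i<cb d h u. dlt (u @ [i]) w)"
proof (cases "w \<in> tree_vertices d h")
  case False
  have "w \<noteq> u" using u False by blast
  moreover have "u \<noteq> [] \<Longrightarrow> w \<noteq> butlast u" using V_butlast[OF u] False by blast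
  moreover have "\<not> (\<exists>i<cb d h u. w = u @ [i])" using V_snoc_iff u False by blast
  ultimately show ?thesis using False
    unfolding tree_Delta_def by (simp add: sum_snoc_dlt dlt_def)
next
  case True
  have c1: "(\<exists>i. w = u @ [i]) \<longleftrightarrow> (\<exists>i<cb d h u. w = u @ [i])" using True V_snoc_iff by blast
  have c2: "(\<exists>i. u = w @ [i]) \<longleftrightarrow> (u \<noteq> [] \<and> w = butlast u)"
  proof
    assume "\<exists>i. u = w @ [i]" then show "u \<noteq> [] \<and> w = butlast u" by auto
  next
    assume "u \<noteq> [] \<and> w = butlast u"
    then have "u = w @ [last u]" by simp
    then show "\<exists>i. u = w @ [i]" by blast
  qed
  have n1: "u = w \<Longrightarrow> \<not> (\<exists>i. w = u @ [i]) \<and> \<not> (\<exists>i. u = w @ [i])" by auto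
  have n2: "(\<exists>i. w = u @ [i]) \<Longrightarrow> \<not> (\<exists>i. u = w @ [i])" by auto
  show ?thesis
    unfolding tree_Delta_def tree_adj_def sum_snoc_dlt dlt_def
    using True u c1 c2 n1 n2 by (auto split: if_splits)
qed

lemma lat_cong:
  assumes "x \<in> tree_lattice d h" "\<And>v. x v = y v" shows "y \<in> tree_lattice d h"
proof -
  have "x = y" by (rule ext) (rule assms(2))
  then show ?thesis using assms(1) by simp
qed

lemma lat_row: "u \<in> tree_vertices d h \<Longrightarrow> tree_Delta d h u \<in> tree_lattice d h"
  unfolding tree_lattice_def
proof (intro CollectI exI[of _ "dlt u"] ext)
  fix v assume u: "u \<in> tree_vertices d h"
  have "(\<Sum>u'\<in>tree_vertices d h. dlt u u' * tree_Delta d h u' v)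
      = (\<Sum>u'\<in>tree_vertices d h. if u' = u then tree_Delta d h u' v else 0)"
    by (intro sum.cong) (auto simp: dlt_def)
  also have "\<dots> = tree_Delta d h u v" using u V_finite by (simp add: sum.delta sum.delta')
  finally show "tree_Delta d h u v = (\<Sum>u'\<in>tree_vertices d h. dlt u u' * tree_Delta d h u' v)" by simp
qed

lemma lat_add: "x \<in> tree_lattice d h \<Longrightarrow> y \<in> tree_lattice d h \<Longrightarrow> (\<lambda>v. x v + y v) \<in> tree_lattice d h"
proof -
  assume "x \<in> tree_lattice d h" "y \<in> tree_lattice d h"
  then obtain c1 c2 where c1: "x = (\<lambda>v. \<Sum>u\<in>tree_vertices d h. c1 u * tree_Delta d h u v)"
    and c2: "y = (\<lambda>v. \<Sum>u\<in>tree_vertices d h. c2 u * tree_Delta d h u v)"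
    unfolding tree_lattice_def by blast
  show ?thesis unfolding tree_lattice_def
    by (intro CollectI exI[of _ "\<lambda>u. c1 u + c2 u"] ext)
       (simp add: c1 c2 sum.distrib distrib_right)
qed

lemma lat_smult: "x \<in> tree_lattice d h \<Longrightarrow> (\<lambda>v. k * x v) \<in> tree_lattice d h"
proof -
  assume "x \<in> tree_lattice d h"
  then obtain c1 where c1: "x = (\<lambda>v. \<Sum>u\<in>tree_vertices d h. c1 u * tree_Delta d h u v)"
    unfolding tree_lattice_def by blast
  show ?thesis unfolding tree_lattice_def
    by (intro CollectI exI[of _ "\<lambda>u. k * c1 u"] ext)
       (simp add: c1 sum_distrib_left mult.assoc)
qed

lemma lat_zero: "(\<lambda>v. 0) \<in> tree_lattice d h"
  unfolding tree_lattice_def by (intro CollectI exI[of _ "\<lambda>u. 0"] ext) simp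

lemma lat_diff: "x \<in> tree_lattice d h \<Longrightarrow> y \<in> tree_lattice d h \<Longrightarrow> (\<lambda>v. x v - y v) \<in> tree_lattice d h"
proof -
  assume a: "x \<in> tree_lattice d h" "y \<in> tree_lattice d h"
  have "(\<lambda>v. x v + (-1) * y v) \<in> tree_lattice d h" using lat_add[OF a(1) lat_smult[OF a(2)]] .
  then show ?thesis by (rule lat_cong) simp
qed

lemma lat_sum: "finite I \<Longrightarrow> (\<And>i. i \<in> I \<Longrightarrow> f i \<in> tree_lattice d h) \<Longrightarrow>
   (\<lambda>v. \<Sum>i\<in>I. f i v) \<in> tree_lattice d h"
proof (induction I rule: finite_induct)
  case empty
  then show ?case using lat_zero by simp
next
  case (insert a F)
  have "(\<lambda>v. f a v + (\<Sum>i\<in>F. f i v)) \<in> tree_lattice d h"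
    using insert by (intro lat_add) auto
  then show ?case by (rule lat_cong) (simp add: insert)
qed

lemma lat_vanish: "x \<in> tree_lattice d h \<Longrightarrow> v \<notin> tree_vertices d h \<Longrightarrow> x v = 0"
  unfolding tree_lattice_def tree_Delta_def by auto

definition Sg :: "int \<Rightarrow> nat \<Rightarrow> int" where
  "Sg Q n = (\<Sum>i\<le>n. Q ^ i)"

lemma Sg_0 [simp]: "Sg Q 0 = 1" by (simp add: Sg_def)

lemma Sg_Suc: "Sg Q (Suc n) = Sg Q n + Q ^ Suc n" by (simp add: Sg_def)

lemma Sg_Suc': "Sg Q (Suc n) = 1 + Q * Sg Q n"
proof (induction n)
  case 0
  show ?case by (simp add: Sg_def)
next
  case (Suc n)
  have "Sg Q (Suc (Suc n)) = Sg Q (Suc n) + Q ^ Suc (Suc n)" by (rule Sg_Suc)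
  also have "\<dots> = 1 + Q * Sg Q n + Q ^ Suc (Suc n)" using Suc.IH by simp
  also have "\<dots> = 1 + Q * (Sg Q n + Q ^ Suc n)" by (simp add: algebra_simps)
  also have "\<dots> = 1 + Q * Sg Q (Suc n)" by (simp add: Sg_Suc)
  finally show ?case .
qed

lemma Sg_rec: "(Q + 1) * Sg Q (Suc n) - Q * Sg Q n = Sg Q (Suc (Suc n))"
  by (simp add: Sg_Suc algebra_simps)

lemma Sg_pos: "Q \<ge> 0 \<Longrightarrow> Sg Q n > 0"
  by (induction n) (auto simp: Sg_Suc' intro!: add_pos_nonneg mult_nonneg_nonneg)

lemma cop1: "coprime (1 + Q * x) (Q::int)"
proof (rule coprimeI)
  fix c assume a: "c dvd 1 + Q * x" "c dvd Q"
  then have "c dvd Q * x" by simp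
  then show "is_unit c" using a(1) by (simp add: dvd_add_left_iff)
qed

lemma Sg_coprime: "coprime (Sg Q n) Q"
  by (cases n) (simp_all add: Sg_Suc' cop1)

lemma L_lemma:
  assumes d3: "d \<ge> 3"
  shows "\<forall>v. v \<in> tree_vertices d h \<longrightarrow> length v = h - n \<longrightarrow> 1 \<le> length v \<longrightarrow>
     (\<lambda>w. Sg (int d - 1) (Suc n) * dlt v w - Sg (int d - 1) n * dlt (butlast v) w) \<in> tree_lattice d h"
proof (induction n)
  case 0
  show ?case
  proof (intro allI impI)
    fix v assume v: "v \<in> tree_vertices d h" "length v = h - 0" "1 \<le> length v"
    have cb0: "cb d h v = 0" using v unfolding cb_def by simp
    have "v \<noteq> []" using v by auto
    have "tree_Delta d h v \<in> tree_lattice d h" by (rule lat_row[OF v(1)])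
    then show "(\<lambda>w. Sg (int d - 1) (Suc 0) * dlt v w - Sg (int d - 1) 0 * dlt (butlast v) w) \<in> tree_lattice d h"
    proof (rule lat_cong)
      fix w show "tree_Delta d h v w = Sg (int d - 1) (Suc 0) * dlt v w - Sg (int d - 1) 0 * dlt (butlast v) w"
        using row_eq[OF v(1), of w] cb0 \<open>v \<noteq> []\<close> by (simp add: Sg_Suc')
    qed
  qed
next
  case (Suc n)
  show ?case
  proof (intro allI impI)
    fix v assume v: "v \<in> tree_vertices d h" "length v = h - Suc n" "1 \<le> length v"
    define Q where "Q = int d - 1"
    have vne: "v \<noteq> []" using v by auto
    have cbv: "cb d h v = d - 1" using v vne unfolding cb_def by auto
    have Qd: "int (d - 1) = Q" "int (d - Suc 0) = Q" using d3 unfolding Q_def by simp_all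
    have ch: "(\<lambda>w. Sg Q (Suc n) * dlt (v @ [i]) w - Sg Q n * dlt v w) \<in> tree_lattice d h"
      if i: "i < d - 1" for i
    proof -
      have "v @ [i] \<in> tree_vertices d h" using V_snoc_iff v(1) i cbv by simp
      moreover have "length (v @ [i]) = h - n" using v by auto
      moreover have "1 \<le> length (v @ [i])" by simp
      ultimately show ?thesis using Suc.IH unfolding Q_def by fastforce
    qed
    have Y: "(\<lambda>w. Sg Q (Suc n) * tree_Delta d h v w +
               (\<Sum>i<d - 1. Sg Q (Suc n) * dlt (v @ [i]) w - Sg Q n * dlt v w)) \<in> tree_lattice d h"
      by (intro lat_add lat_smult lat_row v(1) lat_sum) (use ch in auto)
    show "(\<lambda>w. Sg (int d - 1) (Suc (Suc n)) * dlt v w - Sg (int d - 1) (Suc n) * dlt (butlast v) w) \<in> tree_lattice d h"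
      unfolding Q_def[symmetric]
    proof (rule lat_cong[OF Y])
      fix w
      have s: "(\<Sum>i<d - 1. Sg Q (Suc n) * dlt (v @ [i]) w - Sg Q n * dlt v w)
          = Sg Q (Suc n) * (\<Sum>i<d - 1. dlt (v @ [i]) w) - Q * Sg Q n * dlt v w"
        by (simp add: sum_subtractf sum_distrib_left Qd)
      have r: "(Q + 1) * Sg Q (Suc n) - Q * Sg Q n = Sg Q (Suc (Suc n))" by (rule Sg_rec)
      have dQ: "int d = Q + 1" unfolding Q_def by simp
      show "Sg Q (Suc n) * tree_Delta d h v w +
               (\<Sum>i<d - 1. Sg Q (Suc n) * dlt (v @ [i]) w - Sg Q n * dlt v w)
            = Sg Q (Suc (Suc n)) * dlt v w - Sg Q (Suc n) * dlt (butlast v) w"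
        unfolding s row_eq[OF v(1), of w] cbv r[symmetric] using vne dQ
        by (simp add: algebra_simps)
    qed
  qed
qed

lemma nil_V [simp]: "[] \<in> tree_vertices d h"
  unfolding tree_vertices_def by simp

lemma root_lemma:
  assumes d3: "d \<ge> 3" and h1: "h \<ge> 1"
  shows "(\<lambda>w. int d * (int d - 1) ^ h * dlt [] w) \<in> tree_lattice d h"
proof -
  define Q where "Q = int d - 1"
  obtain k where hk: "h = Suc k" using h1 by (cases h) auto
  have cb0: "cb d h [] = d" using h1 by (simp add: cb_def)
  have ch: "(\<lambda>w. Sg Q h * dlt [i] w - Sg Q k * dlt [] w) \<in> tree_lattice d h" if i: "i < d" for i
  proof -
    have "[] @ [i] \<in> tree_vertices d h" using V_snoc_iff[of "[]" i d h] cb0 i by simp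
    then have "[i] \<in> tree_vertices d h" by simp
    moreover have "length [i] = h - k" using hk by simp
    ultimately show ?thesis using L_lemma[OF d3, of h k] hk unfolding Q_def by fastforce
  qed
  have Y: "(\<lambda>w. Sg Q h * tree_Delta d h [] w +
               (\<Sum>i<d. Sg Q h * dlt [i] w - Sg Q k * dlt [] w)) \<in> tree_lattice d h"
    by (intro lat_add lat_smult lat_row nil_V lat_sum) (use ch in auto)
  show ?thesis unfolding Q_def[symmetric]
  proof (rule lat_cong[OF Y])
    fix w
    define A where "A = (\<Sum>i<d. dlt [i] w)"
    have s: "(\<Sum>i<d. Sg Q h * dlt [i] w - Sg Q k * dlt [] w)
          = Sg Q h * A - int d * Sg Q k * dlt [] w"
      unfolding A_def by (simp add: sum_subtractf sum_distrib_left)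
    have r0: "tree_Delta d h [] w = int d * dlt [] w - A"
      using row_eq[OF nil_V, of d h w] cb0 unfolding A_def by simp
    have e: "Sg Q h = Sg Q k + Q ^ h" using hk Sg_Suc by simp
    show "Sg Q h * tree_Delta d h [] w + (\<Sum>i<d. Sg Q h * dlt [i] w - Sg Q k * dlt [] w)
          = int d * Q ^ h * dlt [] w"
      unfolding s r0 unfolding e
      by (simp add: algebra_simps)
  qed
qed

lemma path_lemma:
  assumes d3: "d \<ge> 3"
  shows "v \<in> tree_vertices d h \<Longrightarrow> \<exists>M t. M > 0 \<and> coprime M (int d - 1) \<and>
           (\<lambda>w. M * dlt v w - t * dlt [] w) \<in> tree_lattice d h"
proof (induction v rule: rev_induct)
  case Nil
  have "(\<lambda>w. 1 * dlt [] w - 1 * dlt [] w) \<in> tree_lattice d h"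
    by (rule lat_cong[OF lat_zero]) simp
  then show ?case by (intro exI[of _ 1]) auto
next
  case (snoc x xs)
  define Q where "Q = int d - 1"
  have xsV: "xs \<in> tree_vertices d h" using snoc.prems V_snoc_iff by blast
  obtain M t where M: "M > 0" "coprime M Q" "(\<lambda>w. M * dlt xs w - t * dlt [] w) \<in> tree_lattice d h"
    using snoc.IH[OF xsV] unfolding Q_def by blast
  define n where "n = h - length (xs @ [x])"
  have "length (xs @ [x]) \<le> h" using snoc.prems unfolding tree_vertices_def by blast
  then have "length (xs @ [x]) = h - n" unfolding n_def by simp
  then have X: "(\<lambda>w. Sg Q (Suc n) * dlt (xs @ [x]) w - Sg Q n * dlt xs w) \<in> tree_lattice d h"
    using spec[OF L_lemma[OF d3, of h n], of "xs @ [x]"] snoc.prems unfolding Q_def by simp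
  have Y: "(\<lambda>w. M * (Sg Q (Suc n) * dlt (xs @ [x]) w - Sg Q n * dlt xs w)
            + Sg Q n * (M * dlt xs w - t * dlt [] w)) \<in> tree_lattice d h"
    by (intro lat_add lat_smult X M(3))
  have "(\<lambda>w. (M * Sg Q (Suc n)) * dlt (xs @ [x]) w - (Sg Q n * t) * dlt [] w) \<in> tree_lattice d h"
    by (rule lat_cong[OF Y]) (simp add: algebra_simps)
  moreover have "M * Sg Q (Suc n) > 0" using M(1) Sg_pos[of Q] d3 unfolding Q_def by simp
  moreover have "coprime (M * Sg Q (Suc n)) Q" using M(2) Sg_coprime by simp
  ultimately show ?case unfolding Q_def by blast
qed

lemma vec_expand:
  assumes y: "\<forall>v. v \<notin> tree_vertices d h \<longrightarrow> y v = 0"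
  shows "y w = (\<Sum>v\<in>tree_vertices d h. y v * dlt v w)"
proof (cases "w \<in> tree_vertices d h")
  case True
  have "(\<Sum>v\<in>tree_vertices d h. y v * dlt v w) = (\<Sum>v\<in>tree_vertices d h. if v = w then y v else 0)"
    by (intro sum.cong) (auto simp: dlt_def)
  also have "\<dots> = y w" using True V_finite by (simp add: sum.delta sum.delta')
  finally show ?thesis by simp
next
  case False
  have "(\<Sum>v\<in>tree_vertices d h. y v * dlt v w) = (\<Sum>v\<in>tree_vertices d h. 0)"
    using False by (intro sum.cong) (auto simp: dlt_def)
  then show ?thesis using False y by simp
qed

lemma all_good:
  assumes d3: "d \<ge> 3" and y: "\<forall>v. v \<notin> tree_vertices d h \<longrightarrow> y v = 0"
  shows "\<exists>M t. M > 0 \<and> coprime M (int d - 1) \<and> (\<lambda>w. M * y w - t * dlt [] w) \<in> tree_lattice d h"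
proof -
  define Q where "Q = int d - 1"
  have gen: "\<exists>M t. M > 0 \<and> coprime M Q \<and>
      (\<lambda>w. M * (\<Sum>v\<in>I. y v * dlt v w) - t * dlt [] w) \<in> tree_lattice d h"
    if "finite I" "I \<subseteq> tree_vertices d h" for I
    using that
  proof (induction I rule: finite_induct)
    case empty
    have "(\<lambda>w. 1 * (\<Sum>v\<in>{}. y v * dlt v w) - 0 * dlt [] w) \<in> tree_lattice d h"
      by (rule lat_cong[OF lat_zero]) simp
    then show ?case by (intro exI[of _ 1] exI[of _ 0]) auto
  next
    case (insert a F)
    obtain M1 t1 where M1: "M1 > 0" "coprime M1 Q" "(\<lambda>w. M1 * dlt a w - t1 * dlt [] w) \<in> tree_lattice d h"
      using path_lemma[OF d3, of a h] insert.prems unfolding Q_def by auto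
    obtain M2 t2 where M2: "M2 > 0" "coprime M2 Q"
        "(\<lambda>w. M2 * (\<Sum>v\<in>F. y v * dlt v w) - t2 * dlt [] w) \<in> tree_lattice d h"
      using insert.IH insert.prems by auto
    have Y: "(\<lambda>w. (M2 * y a) * (M1 * dlt a w - t1 * dlt [] w) +
                M1 * (M2 * (\<Sum>v\<in>F. y v * dlt v w) - t2 * dlt [] w)) \<in> tree_lattice d h"
      by (intro lat_add lat_smult M1(3) M2(3))
    have "(\<lambda>w. (M1 * M2) * (\<Sum>v\<in>insert a F. y v * dlt v w) - (M2 * y a * t1 + M1 * t2) * dlt [] w)
          \<in> tree_lattice d h"
      by (rule lat_cong[OF Y]) (simp add: insert algebra_simps)
    moreover have "M1 * M2 > 0" using M1 M2 by simp
    moreover have "coprime (M1 * M2) Q" using M1 M2 by simp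
    ultimately show ?case by blast
  qed
  obtain M t where Mt: "M > 0" "coprime M Q"
      "(\<lambda>w. M * (\<Sum>v\<in>tree_vertices d h. y v * dlt v w) - t * dlt [] w) \<in> tree_lattice d h"
    using gen[OF V_finite order_refl] by blast
  have "(\<lambda>w. M * y w - t * dlt [] w) \<in> tree_lattice d h"
    by (rule lat_cong[OF Mt(3)]) (simp flip: vec_expand[OF y])
  then show ?thesis using Mt unfolding Q_def by blast
qed

lemma vertex_torsion:
  assumes d3: "d \<ge> 3" and h1: "h \<ge> 1" and v: "v \<in> tree_vertices d h"
  shows "\<exists>L>0. (\<lambda>w. L * dlt v w) \<in> tree_lattice d h"
proof -
  obtain M t where M: "M > 0" "(\<lambda>w. M * dlt v w - t * dlt [] w) \<in> tree_lattice d h"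
    using path_lemma[OF d3 v] by blast
  define R where "R = int d * (int d - 1) ^ h"
  have R: "(\<lambda>w. R * dlt [] w) \<in> tree_lattice d h" unfolding R_def using root_lemma[OF d3 h1] .
  have Rp: "R > 0" unfolding R_def using d3 by simp
  have Y: "(\<lambda>w. R * (M * dlt v w - t * dlt [] w) + t * (R * dlt [] w)) \<in> tree_lattice d h"
    by (intro lat_add lat_smult M(2) R)
  have "(\<lambda>w. (R * M) * dlt v w) \<in> tree_lattice d h"
    by (rule lat_cong[OF Y]) (simp add: algebra_simps)
  moreover have "R * M > 0" using Rp M by simp
  ultimately show ?thesis by blast
qed

definition fv :: "nat \<Rightarrow> nat \<Rightarrow> nat list \<Rightarrow> int" where
  "fv d h v = Sg (int d - 1) (h - length v)"

lemma sum_dlt: "w \<in> tree_vertices d h \<Longrightarrow> (\<Sum>v\<in>tree_vertices d h. dlt w v * g v) = g w"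
proof -
  assume w: "w \<in> tree_vertices d h"
  have "(\<Sum>v\<in>tree_vertices d h. dlt w v * g v) = (\<Sum>v\<in>tree_vertices d h. if v = w then g v else 0)"
    by (intro sum.cong) (auto simp: dlt_def)
  also have "\<dots> = g w" using w V_finite by (simp add: sum.delta sum.delta')
  finally show ?thesis .
qed

lemma row_sum:
  assumes u: "u \<in> tree_vertices d h"
  shows "(\<Sum>v\<in>tree_vertices d h. tree_Delta d h u v * g v)
     = int d * g u - (if u \<noteq> [] then g (butlast u) else 0) - (\<Sum>i<cb d h u. g (u @ [i]))"
proof -
  let ?V = "tree_vertices d h"
  have "(\<Sum>v\<in>?V. tree_Delta d h u v * g v)
     = (\<Sum>v\<in>?V. int d * (dlt u v * g v) - (if u \<noteq> [] then dlt (butlast u) v * g v else 0)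
          - (\<Sum>i<cb d h u. dlt (u @ [i]) v * g v))"
    by (intro sum.cong refl) (simp add: row_eq[OF u] algebra_simps sum_distrib_right sum_distrib_left)
  also have "\<dots> = int d * (\<Sum>v\<in>?V. dlt u v * g v)
        - (\<Sum>v\<in>?V. (if u \<noteq> [] then dlt (butlast u) v * g v else 0))
        - (\<Sum>i<cb d h u. \<Sum>v\<in>?V. dlt (u @ [i]) v * g v)"
    by (simp add: sum_subtractf sum_distrib_left sum.swap[of _ "{..<cb d h u}"])
  also have "(\<Sum>v\<in>?V. dlt u v * g v) = g u" by (rule sum_dlt[OF u])
  also have "(\<Sum>v\<in>?V. (if u \<noteq> [] then dlt (butlast u) v * g v else 0))
         = (if u \<noteq> [] then g (butlast u) else 0)"
    using sum_dlt[OF V_butlast[OF u]] by simp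
  also have "(\<Sum>i<cb d h u. \<Sum>v\<in>?V. dlt (u @ [i]) v * g v) = (\<Sum>i<cb d h u. g (u @ [i]))"
  proof (intro sum.cong refl)
    fix i assume "i \<in> {..<cb d h u}"
    then have "u @ [i] \<in> ?V" using V_snoc_iff u by simp
    then show "(\<Sum>v\<in>?V. dlt (u @ [i]) v * g v) = g (u @ [i])" by (rule sum_dlt)
  qed
  finally show ?thesis .
qed

lemma F_row:
  assumes d3: "d \<ge> 3" and h1: "h \<ge> 1" and u: "u \<in> tree_vertices d h"
  shows "(int d - 1) ^ h dvd (\<Sum>v\<in>tree_vertices d h. tree_Delta d h u v * fv d h v)"
proof -
  define Q where "Q = int d - 1"
  have dQ: "int d = Q + 1" unfolding Q_def by simp
  have Qd: "int (d - 1) = Q" "int (d - Suc 0) = Q" using d3 unfolding Q_def by simp_all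
  have lu: "length u \<le> h" using u unfolding tree_vertices_def by blast
  note rs = row_sum[OF u, of "fv d h"]
  show ?thesis unfolding Q_def[symmetric] rs
  proof (cases "u = []")
    case True
    obtain k where hk: "h = Suc k" using h1 by (cases h) auto
    have cb0: "cb d h u = d" using True h1 by (simp add: cb_def)
    have "int d * fv d h u - (if u \<noteq> [] then fv d h (butlast u) else 0) - (\<Sum>i<cb d h u. fv d h (u @ [i]))
        = int d * Sg Q (Suc k) - int d * Sg Q k"
      unfolding cb0 using True hk by (simp add: fv_def Q_def)
    also have "\<dots> = Q ^ h * int d" using hk by (simp add: Sg_Suc algebra_simps)
    finally show "Q ^ h dvd int d * fv d h u - (if u \<noteq> [] then fv d h (butlast u) else 0) - (\<Sum>i<cb d h u. fv d h (u @ [i]))"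
      by simp
  next
    case False
    show "Q ^ h dvd int d * fv d h u - (if u \<noteq> [] then fv d h (butlast u) else 0) - (\<Sum>i<cb d h u. fv d h (u @ [i]))"
    proof (cases "length u < h")
      case True
      obtain k where hk: "h - length u = Suc k" using True by (cases "h - length u") auto
      have cbv: "cb d h u = d - 1" using True False by (simp add: cb_def)
      have l1: "length u \<ge> 1" using False by (cases u) auto
      have f1: "fv d h u = Sg Q (Suc k)" using hk by (simp add: fv_def Q_def)
      have f2: "fv d h (butlast u) = Sg Q (Suc (Suc k))"
        using hk l1 by (simp add: fv_def Q_def Suc_diff_le)
      have e3: "h - Suc (length u) = k" using hk by arith
      have f3: "fv d h (u @ [i]) = Sg Q k" for i
        using e3 by (simp add: fv_def Q_def)
      have "int d * fv d h u - (if u \<noteq> [] then fv d h (butlast u) else 0) - (\<Sum>i<cb d h u. fv d h (u @ [i]))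
          = (Q + 1) * Sg Q (Suc k) - Sg Q (Suc (Suc k)) - Q * Sg Q k"
        unfolding cbv f1 f2 f3 using False dQ Qd by simp
      also have "\<dots> = 0" using Sg_rec[of Q k] by simp
      finally show ?thesis by simp
    next
      case False2: False
      have lh: "length u = h" using lu False2 by simp
      have cb0: "cb d h u = 0" using lh by (simp add: cb_def)
      have f1: "fv d h u = 1" using lh by (simp add: fv_def)
      have f2: "fv d h (butlast u) = Sg Q 1"
        using lh False by (cases u rule: rev_cases) (auto simp: fv_def Q_def)
      have "int d * fv d h u - (if u \<noteq> [] then fv d h (butlast u) else 0) - (\<Sum>i<cb d h u. fv d h (u @ [i]))
          = 0"
        unfolding cb0 f1 f2 using False dQ by (simp add: Sg_Suc')
      then show ?thesis by simp
    qed
  qed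
qed

lemma F_lat:
  assumes d3: "d \<ge> 3" and h1: "h \<ge> 1" and x: "x \<in> tree_lattice d h"
  shows "(int d - 1) ^ h dvd (\<Sum>v\<in>tree_vertices d h. x v * fv d h v)"
proof -
  obtain c where c: "x = (\<lambda>v. \<Sum>u\<in>tree_vertices d h. c u * tree_Delta d h u v)"
    using x unfolding tree_lattice_def by blast
  have "(\<Sum>v\<in>tree_vertices d h. x v * fv d h v)
      = (\<Sum>v\<in>tree_vertices d h. \<Sum>u\<in>tree_vertices d h. c u * (tree_Delta d h u v * fv d h v))"
    unfolding c by (simp add: sum_distrib_right mult.assoc)
  also have "\<dots> = (\<Sum>u\<in>tree_vertices d h. c u * (\<Sum>v\<in>tree_vertices d h. tree_Delta d h u v * fv d h v))"
    by (subst sum.swap) (simp add: sum_distrib_left)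
  finally show ?thesis
    using F_row[OF d3 h1] by (simp add: dvd_sum)
qed

lemma z_ord_dvd:
  assumes d3: "d \<ge> 3" and h1: "h \<ge> 1"
    and x: "(\<lambda>w. int n * (int d * dlt [] w)) \<in> tree_lattice d h"
  shows "(d - 1) ^ h dvd n"
proof -
  define Q where "Q = int d - 1"
  have "Q ^ h dvd (\<Sum>v\<in>tree_vertices d h. int n * (int d * dlt [] v) * fv d h v)"
    using F_lat[OF d3 h1 x] unfolding Q_def .
  also have "(\<Sum>v\<in>tree_vertices d h. int n * (int d * dlt [] v) * fv d h v)
      = (\<Sum>v\<in>tree_vertices d h. dlt [] v * (int n * int d * fv d h v))"
    by (simp add: algebra_simps)
  also have "\<dots> = int n * int d * fv d h []" by (rule sum_dlt[OF nil_V])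
  also have "\<dots> = int n * (int d * Sg Q h)" by (simp add: fv_def Q_def)
  finally have dv: "Q ^ h dvd int n * (int d * Sg Q h)" .
  have "coprime (int d) Q" using cop1[of Q 1] unfolding Q_def by simp
  then have "coprime (int d * Sg Q h) Q" using Sg_coprime by simp
  then have "coprime (int d * Sg Q h) (Q ^ h)" by simp
  then have "Q ^ h dvd int n" using dv by (simp add: coprime_dvd_mult_left_iff coprime_commute)
  moreover have "Q = int (d - 1)" using d3 unfolding Q_def by simp
  ultimately have "int ((d - 1) ^ h) dvd int n" by simp
  then show ?thesis by (simp only: int_dvd_int_iff)
qed

lemma ZV_cg: "comm_group (ZV V)"
proof (rule comm_groupI)
  fix x assume "x \<in> carrier (ZV V)"
  then show "\<exists>y\<in>carrier (ZV V). y \<otimes>\<^bsub>ZV V\<^esub> x = \<one>\<^bsub>ZV V\<^esub>"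
    by (intro bexI[of _ "\<lambda>v. - x v"]) (auto simp: ZV_def)
qed (auto simp: ZV_def)

lemma ZV_inv: "x \<in> carrier (ZV V) \<Longrightarrow> inv\<^bsub>ZV V\<^esub> x = (\<lambda>v. - x v)"
proof -
  assume x: "x \<in> carrier (ZV V)"
  interpret comm_group "ZV V" by (rule ZV_cg)
  show ?thesis by (rule inv_equality) (use x in \<open>auto simp: ZV_def\<close>)
qed

lemma ZV_pow: "x [^]\<^bsub>ZV V\<^esub> (n::nat) = (\<lambda>v. int n * x v)"
  by (induction n) (auto simp: ZV_def algebra_simps)

lemma ZV_ipow:
  assumes x: "x \<in> carrier (ZV V)"
  shows "x [^]\<^bsub>ZV V\<^esub> (k::int) = (\<lambda>v. k * x v)"
proof -
  interpret comm_group "ZV V" by (rule ZV_cg)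
  have c: "(\<lambda>v. int n * x v) \<in> carrier (ZV V)" for n using x unfolding ZV_def by simp
  show ?thesis
  proof (cases k rule: int_cases2)
    case (nonneg n)
    then show ?thesis by (simp add: int_pow_int ZV_pow)
  next
    case (nonpos n)
    have "x [^]\<^bsub>ZV V\<^esub> (- int n) = inv\<^bsub>ZV V\<^esub> (x [^]\<^bsub>ZV V\<^esub> n)"
      by (rule int_pow_neg_int[OF x])
    also have "\<dots> = (\<lambda>v. - (int n * x v))" unfolding ZV_pow by (rule ZV_inv[OF c])
    finally show ?thesis using nonpos by simp
  qed
qed

lemma lat_subgroup: "subgroup (tree_lattice d h) (ZV (tree_vertices d h))"
proof (rule subgroup.intro)
  show "tree_lattice d h \<subseteq> carrier (ZV (tree_vertices d h))"
    using lat_vanish by (auto simp: ZV_def)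
  show "x \<otimes>\<^bsub>ZV (tree_vertices d h)\<^esub> y \<in> tree_lattice d h"
    if "x \<in> tree_lattice d h" "y \<in> tree_lattice d h" for x y
    using lat_add[OF that] by (simp add: ZV_def)
  show "\<one>\<^bsub>ZV (tree_vertices d h)\<^esub> \<in> tree_lattice d h" using lat_zero by (simp add: ZV_def)
  show "inv\<^bsub>ZV (tree_vertices d h)\<^esub> x \<in> tree_lattice d h" if "x \<in> tree_lattice d h" for x
  proof -
    have c: "x \<in> carrier (ZV (tree_vertices d h))" using that lat_vanish by (auto simp: ZV_def)
    have "(\<lambda>v. (-1) * x v) = inv\<^bsub>ZV (tree_vertices d h)\<^esub> x" using ZV_inv[OF c] by simp
    then show ?thesis using lat_smult[OF that, of "-1"] by metis
  qed
qed

lemma lat_normal: "tree_lattice d h \<lhd> ZV (tree_vertices d h)"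
  using comm_group.normal_iff_subgroup[OF ZV_cg] lat_subgroup by blast

abbreviation pi :: "nat \<Rightarrow> nat \<Rightarrow> (nat list \<Rightarrow> int) \<Rightarrow> (nat list \<Rightarrow> int) set" where
  "pi d h y \<equiv> tree_lattice d h #>\<^bsub>ZV (tree_vertices d h)\<^esub> y"

lemma pi_eq:
  assumes y: "y \<in> carrier (ZV (tree_vertices d h))" and y': "y' \<in> carrier (ZV (tree_vertices d h))"
    and l: "(\<lambda>v. y v - y' v) \<in> tree_lattice d h"
  shows "pi d h y = pi d h y'"
proof -
  interpret comm_group "ZV (tree_vertices d h)" by (rule ZV_cg)
  have "(\<lambda>v. y v - y' v) \<otimes>\<^bsub>ZV (tree_vertices d h)\<^esub> y' \<in> pi d h y'"
    by (rule rcosI[OF l subgroup.subset[OF lat_subgroup] y'])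
  moreover have "(\<lambda>v. y v - y' v) \<otimes>\<^bsub>ZV (tree_vertices d h)\<^esub> y' = y" by (simp add: ZV_def)
  ultimately have "y \<in> pi d h y'" by simp
  then show ?thesis using repr_independence[OF _ y' lat_subgroup] by simp
qed

lemma pi_one:
  assumes y: "y \<in> carrier (ZV (tree_vertices d h))" and e: "pi d h y = tree_lattice d h"
  shows "y \<in> tree_lattice d h"
proof -
  interpret comm_group "ZV (tree_vertices d h)" by (rule ZV_cg)
  have "y \<in> pi d h y" by (rule rcos_self[OF y lat_subgroup])
  then show ?thesis using e by simp
qed

lemma pi_one':
  assumes y: "y \<in> tree_lattice d h"
  shows "pi d h y = tree_lattice d h"
proof -
  interpret comm_group "ZV (tree_vertices d h)" by (rule ZV_cg)
  show ?thesis using subgroup.rcos_const[OF lat_subgroup is_group y] .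
qed

lemma pi_pow:
  assumes y: "y \<in> carrier (ZV (tree_vertices d h))"
  shows "pi d h y [^]\<^bsub>ZV (tree_vertices d h) Mod tree_lattice d h\<^esub> (n::nat) = pi d h (\<lambda>v. int n * y v)"
proof -
  have "pi d h y [^]\<^bsub>ZV (tree_vertices d h) Mod tree_lattice d h\<^esub> n = pi d h (y [^]\<^bsub>ZV (tree_vertices d h)\<^esub> n)"
    by (rule normal.FactGroup_pow[OF lat_normal y])
  then show ?thesis unfolding ZV_pow .
qed

lemma pi_ipow:
  assumes y: "y \<in> carrier (ZV (tree_vertices d h))"
  shows "pi d h y [^]\<^bsub>ZV (tree_vertices d h) Mod tree_lattice d h\<^esub> (k::int) = pi d h (\<lambda>v. k * y v)"
proof -
  have "pi d h y [^]\<^bsub>ZV (tree_vertices d h) Mod tree_lattice d h\<^esub> k = pi d h (y [^]\<^bsub>ZV (tree_vertices d h)\<^esub> k)"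
    by (rule normal.FactGroup_int_pow[OF lat_normal y])
  then show ?thesis unfolding ZV_ipow[OF y] .
qed

lemma G_cg: "comm_group (ZV (tree_vertices d h) Mod tree_lattice d h)"
  by (rule comm_group.abelian_FactGroup[OF ZV_cg lat_subgroup])

lemma G_finite:
  assumes d3: "d \<ge> 3" and h1: "h \<ge> 1"
  shows "finite (carrier (ZV (tree_vertices d h) Mod tree_lattice d h))"
proof -
  let ?V = "tree_vertices d h"
  have "\<forall>v\<in>?V. \<exists>L>0. (\<lambda>w. L * dlt v w) \<in> tree_lattice d h"
    using vertex_torsion[OF d3 h1] by blast
  then obtain L where L: "\<And>v. v \<in> ?V \<Longrightarrow> L v > 0 \<and> (\<lambda>w. L v * dlt v w) \<in> tree_lattice d h"
    by metis
  define E where "E = (\<lambda>(f::nat list \<Rightarrow> int) w. if w \<in> ?V then f w else 0)"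
  define B where "B = E ` (PiE ?V (\<lambda>v. {0..<L v}))"
  have finB: "finite B" unfolding B_def by (intro finite_imageI finite_PiE V_finite) simp
  have sub: "carrier (ZV ?V Mod tree_lattice d h) \<subseteq> pi d h ` B"
  proof (rule subsetI)
    fix XX assume "XX \<in> carrier (ZV (tree_vertices d h) Mod tree_lattice d h)"
    then obtain y where y: "y \<in> carrier (ZV ?V)" and X: "XX = pi d h y"
      unfolding carrier_FactGroup by blast
    define r where "r = (\<lambda>w. if w \<in> ?V then y w mod L w else 0)"
    have rB: "r \<in> B"
    proof -
      have P1: "(\<lambda>w. if w \<in> ?V then y w mod L w else undefined) \<in> PiE ?V (\<lambda>v. {0..<L v})"
      proof (rule PiE_I)
        fix w assume w: "w \<in> ?V"
        then have "L w > 0" using L by blast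
        then show "(if w \<in> ?V then y w mod L w else undefined) \<in> {0..<L w}" using w by simp
      next
        fix w assume "w \<notin> ?V"
        then show "(if w \<in> ?V then y w mod L w else undefined) = undefined" by simp
      qed
      have P2: "E (\<lambda>w. if w \<in> ?V then y w mod L w else undefined) = r"
        unfolding E_def r_def by (rule ext) simp
      show ?thesis unfolding B_def by (rule image_eqI[where f=E, OF P2[symmetric] P1])
    qed
    have rc: "r \<in> carrier (ZV ?V)" unfolding r_def ZV_def by simp
    define c where "c = (\<lambda>v. if v \<in> ?V then y v div L v * L v else 0)"
    have cv: "\<forall>v. v \<notin> ?V \<longrightarrow> c v = 0" unfolding c_def by simp
    have S: "(\<lambda>w. \<Sum>v\<in>?V. (y v div L v) * (L v * dlt v w)) \<in> tree_lattice d h"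
    proof (rule lat_sum[OF V_finite])
      fix v assume "v \<in> ?V"
      then have "(\<lambda>w. L v * dlt v w) \<in> tree_lattice d h" using L by blast
      then show "(\<lambda>w. (y v div L v) * (L v * dlt v w)) \<in> tree_lattice d h" by (rule lat_smult)
    qed
    have "(\<lambda>w. y w - r w) \<in> tree_lattice d h"
    proof (rule lat_cong[OF S])
      fix w
      have "(\<Sum>v\<in>?V. (y v div L v) * (L v * dlt v w)) = (\<Sum>v\<in>?V. c v * dlt v w)"
        by (intro sum.cong) (auto simp: c_def)
      also have "\<dots> = c w" by (rule vec_expand[OF cv, symmetric])
      also have "\<dots> = y w - r w"
      proof (cases "w \<in> ?V")
        case True
        have e: "y w div L w * L w + y w mod L w = y w" by (rule div_mult_mod_eq)
        have e1: "c w = y w div L w * L w" using True unfolding c_def by simp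
        have e2: "r w = y w mod L w" using True unfolding r_def by simp
        show ?thesis using e e1 e2 by linarith
      next
        case False
        then show ?thesis using y unfolding c_def r_def ZV_def by simp
      qed
      finally show "(\<Sum>v\<in>?V. (y v div L v) * (L v * dlt v w)) = y w - r w" .
    qed
    then have "pi d h y = pi d h r" by (rule pi_eq[OF y rc])
    then show "XX \<in> pi d h ` B" using X rB by blast
  qed
  show ?thesis using finite_subset[OF sub finite_imageI[OF finB]] .
qed

lemma z_carrier: "(\<lambda>w. int d * dlt [] w) \<in> carrier (ZV (tree_vertices d h))"
  unfolding ZV_def dlt_def by auto

lemma key_lemma:
  assumes d3: "d \<ge> 3" and x: "x \<in> carrier (ZV (tree_vertices d h) Mod tree_lattice d h)"
  shows "\<exists>M::nat. coprime M (d - 1) \<and> (\<exists>k::int.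
     x [^]\<^bsub>ZV (tree_vertices d h) Mod tree_lattice d h\<^esub> M
       = pi d h (\<lambda>w. int d * dlt [] w) [^]\<^bsub>ZV (tree_vertices d h) Mod tree_lattice d h\<^esub> k)"
proof -
  obtain y where y: "y \<in> carrier (ZV (tree_vertices d h))" and X: "x = pi d h y"
    using x unfolding carrier_FactGroup by blast
  have yv: "\<forall>v. v \<notin> tree_vertices d h \<longrightarrow> y v = 0" using y unfolding ZV_def by simp
  obtain M t where M: "M > 0" "coprime M (int d - 1)"
     "(\<lambda>w. M * y w - t * dlt [] w) \<in> tree_lattice d h"
    using all_good[OF d3 yv] by blast
  define Mn where "Mn = nat M * d"
  have Mn: "int Mn = M * int d" unfolding Mn_def using M(1) by simp
  have "x [^]\<^bsub>ZV (tree_vertices d h) Mod tree_lattice d h\<^esub> Mn = pi d h (\<lambda>v. int Mn * y v)"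
    unfolding X by (rule pi_pow[OF y])
  also have "\<dots> = pi d h (\<lambda>v. t * (int d * dlt [] v))"
  proof (rule pi_eq)
    show "(\<lambda>v. int Mn * y v) \<in> carrier (ZV (tree_vertices d h))" using yv unfolding ZV_def by simp
    show "(\<lambda>v. t * (int d * dlt [] v)) \<in> carrier (ZV (tree_vertices d h))"
      unfolding ZV_def dlt_def by auto
    have "(\<lambda>v. int d * (M * y v - t * dlt [] v)) \<in> tree_lattice d h" by (rule lat_smult[OF M(3)])
    then show "(\<lambda>v. int Mn * y v - t * (int d * dlt [] v)) \<in> tree_lattice d h"
      by (rule lat_cong) (simp add: Mn algebra_simps)
  qed
  also have "\<dots> = pi d h (\<lambda>w. int d * dlt [] w) [^]\<^bsub>ZV (tree_vertices d h) Mod tree_lattice d h\<^esub> t"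
    by (rule pi_ipow[OF z_carrier, symmetric])
  finally have e: "x [^]\<^bsub>ZV (tree_vertices d h) Mod tree_lattice d h\<^esub> Mn
       = pi d h (\<lambda>w. int d * dlt [] w) [^]\<^bsub>ZV (tree_vertices d h) Mod tree_lattice d h\<^esub> t" .
  have e1: "int (nat M) = M" using M(1) by simp
  have e2: "int (d - 1) = int d - 1" using d3 by simp
  have "coprime (int (nat M)) (int (d - 1))" unfolding e1 e2 by (rule M(2))
  then have c1: "coprime (nat M) (d - 1)" using coprime_int_iff by blast
  have "coprime ((d - 1) + 1) (d - 1)" by (rule coprime_add_one_left)
  then have c2: "coprime d (d - 1)" using d3 by simp
  have "coprime Mn (d - 1)" unfolding Mn_def using c1 c2 by simp
  then show ?thesis using e by blast
qed

lemma z_ord: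
  assumes d3: "d \<ge> 3" and h1: "h \<ge> 1"
  shows "group.ord (ZV (tree_vertices d h) Mod tree_lattice d h) (pi d h (\<lambda>w. int d * dlt [] w)) = (d - 1) ^ h"
proof -
  interpret G: comm_group "ZV (tree_vertices d h) Mod tree_lattice d h" by (rule G_cg)
  have zc: "pi d h (\<lambda>w. int d * dlt [] w) \<in> carrier (ZV (tree_vertices d h) Mod tree_lattice d h)"
    unfolding carrier_FactGroup using z_carrier by blast
  have vc: "(\<lambda>v. int n * (int d * dlt [] v)) \<in> carrier (ZV (tree_vertices d h))" for n
    unfolding ZV_def dlt_def by auto
  have Nq: "int ((d - 1) ^ h) = (int d - 1) ^ h" using d3 by (simp add: of_nat_diff)
  have Nq': "int (d - Suc 0) = int d - 1" using d3 by simp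
  show ?thesis
  proof (subst G.ord_unique[OF zc], intro allI iffI)
    fix n :: nat
    assume "pi d h (\<lambda>w. int d * dlt [] w) [^]\<^bsub>ZV (tree_vertices d h) Mod tree_lattice d h\<^esub> n
        = \<one>\<^bsub>ZV (tree_vertices d h) Mod tree_lattice d h\<^esub>"
    then have "pi d h (\<lambda>v. int n * (int d * dlt [] v)) = tree_lattice d h"
      using pi_pow[OF z_carrier, of d h n] by simp
    then have "(\<lambda>v. int n * (int d * dlt [] v)) \<in> tree_lattice d h" by (rule pi_one[OF vc])
    then show "(d - 1) ^ h dvd n" by (rule z_ord_dvd[OF d3 h1])
  next
    fix n :: nat
    assume "(d - 1) ^ h dvd n"
    then obtain k where k: "n = (d - 1) ^ h * k" by blast
    have "(\<lambda>v. int k * (int d * (int d - 1) ^ h * dlt [] v)) \<in> tree_lattice d h"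
      by (rule lat_smult[OF root_lemma[OF d3 h1]])
    then have "(\<lambda>v. int n * (int d * dlt [] v)) \<in> tree_lattice d h"
      by (rule lat_cong) (simp add: k Nq Nq' algebra_simps)
    then have "pi d h (\<lambda>v. int n * (int d * dlt [] v)) = tree_lattice d h" by (rule pi_one')
    then show "pi d h (\<lambda>w. int d * dlt [] w) [^]\<^bsub>ZV (tree_vertices d h) Mod tree_lattice d h\<^esub> n
        = \<one>\<^bsub>ZV (tree_vertices d h) Mod tree_lattice d h\<^esub>"
      using pi_pow[OF z_carrier, of d h n] by simp
  qed
qed

theorem theorem2p8:
  fixes d h :: nat
  assumes "d \<ge> 3" and "h \<ge> 1"
  shows "(\<exists>H. hall_subgroup (sandpile_group d h) (d - 1) H) \<and>
         (\<forall>H. hall_subgroup (sandpile_group d h) (d - 1) H \<longrightarrow>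
              cyclic_group ((sandpile_group d h)\<lparr>carrier := H\<rparr>) \<and> card H = (d - 1) ^ h)"
proof -
  have q2: "d - 1 \<ge> 2" using assms(1) by simp
  have zc: "pi d h (\<lambda>w. int d * dlt [] w) \<in> carrier (ZV (tree_vertices d h) Mod tree_lattice d h)"
    unfolding carrier_FactGroup using z_carrier by blast
  show ?thesis unfolding sandpile_group_def
    by (rule hall_abstract[OF G_cg G_finite[OF assms] zc z_ord[OF assms] q2 assms(2) key_lemma[OF assms(1)]])
qed

end
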